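(* For each $\rho>2$, the operator that maps $f\in L^1(\gamma_\infty)$ to $x\mapsto\|H^{\mathrm{glob}}_tf(x)\|_{v(\rho),(0,1]}$ (variation in $t\in(0,1]$) is of weak type $(1,1)$ with respect to $\gamma_\infty$; i.e. there is $C$ with $\gamma_\infty\{x:\|H^{\mathrm{glob}}_tf(x)\|_{v(\rho),(0,1]}>\alpha\}\le \frac C\alpha\|f\|_{L^1(\gamma_\infty)}$ for all $\alpha>0$ and $f\in L^1(\gamma_\infty)$.
   Context: $R(x)=x^2/2$, $d\gamma_\infty(u)=(2\pi)^{-1/2}e^{-R(u)}du$ on $\mathbb R$. $K_t(x,u)=\frac{e^{R(x)}}{\sqrt{1-e^{-2t}}}\exp\bigl(-\frac12\frac{(e^{-t}u-x)^2}{1-e^{-2t}}\bigr)$. Let $\eta\ge0$ be a fixed smooth function on $[0,\infty)$ with $\eta=1$ on $[0,1/2]$ and $\eta=0$ on $[1,\infty)$. Define $H^{\mathrm{glob}}_tf(x)=\int f(u)K_t(x,u)\bigl(1-\eta((1+|x|)|x-u|)\bigr)\,d\gamma_\infty(u)$. For $1\le\rho<\infty$ and an interval $I$, $\|\phi\|_{v(\rho),I}=\sup(\sum_{i=1}^n|\phi(t_i)-\phi(t_{i-1})|^\rho)^{1/\rho}$ over finite increasing sequences in $I$. *)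

theory Defs
  imports "HOL-Analysis.Analysis"
begin

definition R :: "real \<Rightarrow> real" where
  "R x = x\<^sup>2 / 2"

definition gauss :: "real measure" where
  "gauss = density lborel (\<lambda>u. ennreal (exp (- R u) / sqrt (2 * pi)))"

definition K :: "real \<Rightarrow> real \<Rightarrow> real \<Rightarrow> real" where
  "K t x u = exp (R x) / sqrt (1 - exp (-2 * t))
             * exp (- (1/2) * (exp (-t) * u - x)\<^sup>2 / (1 - exp (-2 * t)))"

definition Hglob :: "(real \<Rightarrow> real) \<Rightarrow> real \<Rightarrow> (real \<Rightarrow> real) \<Rightarrow> real \<Rightarrow> real" where
  "Hglob eta t f x =
     (\<integral>u. f u * K t x u * (1 - eta ((1 + \<bar>x\<bar>) * \<bar>x - u\<bar>)) \<partial>gauss)"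

text \<open>Valued in ereal since it may be infinite.\<close>
definition rho_var :: "real \<Rightarrow> real set \<Rightarrow> (real \<Rightarrow> real) \<Rightarrow> ereal" where
  "rho_var \<rho> I \<phi> =
     (SUP ts \<in> {ts. sorted_wrt (<) ts \<and> set ts \<subseteq> I}.
        ereal ((\<Sum>i\<in>{1..<length ts}. \<bar>\<phi> (ts ! i) - \<phi> (ts ! (i - 1))\<bar> powr \<rho>) powr (1 / \<rho>)))"

end

theory Submission
  imports Defs "HOL-Probability.Distributions" "HOL-Computational_Algebra.Polynomial" "HOL-Real_Asymp.Real_Asymp"
begin

lemma gauss_eq: "gauss = density lborel std_normal_density"
  unfolding gauss_def normal_density_def R_def
  by (intro arg_cong[where f="density lborel"] ext) (simp add: field_simps)

lemma prob_gauss: "prob_space gauss"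
  unfolding gauss_eq by (rule prob_space_normal_density) simp

lemma sets_gauss[simp, measurable_cong]: "sets gauss = sets borel"
  unfolding gauss_def by simp

lemma half_tail:
  assumes a: "a > 0"
  shows "(\<integral>\<^sup>+x. ennreal (x * std_normal_density x / a) * indicator {a..} x \<partial>lborel)
         = ennreal (exp (- a\<^sup>2 / 2) / (a * sqrt (2 * pi)))"
proof -
  have "(\<integral>\<^sup>+x. ennreal (x * std_normal_density x / a) * indicator {a..} x \<partial>lborel)
      = ennreal (0 - (- exp (- a\<^sup>2 / 2) / (a * sqrt (2 * pi))))"
  proof (rule nn_integral_FTC_atLeast[where F="\<lambda>x. - exp (- x\<^sup>2 / 2) / (a * sqrt (2 * pi))" and T=0])
    show "(\<lambda>x. x * std_normal_density x / a) \<in> borel_measurable borel"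
      unfolding normal_density_def by measurable
    show "DERIV (\<lambda>x. - exp (- x\<^sup>2 / 2) / (a * sqrt (2 * pi))) x :> x * std_normal_density x / a" if "a \<le> x" for x
      unfolding normal_density_def using a
      by (auto intro!: derivative_eq_intros simp: field_simps)
    show "0 \<le> x * std_normal_density x / a" if "a \<le> x" for x
      using that a by (auto intro!: mult_nonneg_nonneg normal_density_nonneg)
    show "((\<lambda>x::real. - exp (- x\<^sup>2 / 2) / (a * sqrt (2 * pi))) \<longlongrightarrow> 0) at_top" using a by real_asymp
  qed
  then show ?thesis by simp
qed

lemma gauss_tail:
  assumes a: "a > 0"
  shows "emeasure gauss {x. a < \<bar>x\<bar>} \<le> ennreal (2 * (exp (- a\<^sup>2 / 2) / (a * sqrt (2 * pi))))"
proof -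
  define G where "G x = ennreal (x * std_normal_density x / a) * indicator {a..} x" for x
  have Gm: "G \<in> borel_measurable borel" unfolding G_def normal_density_def by measurable
  have "emeasure gauss {x. a < \<bar>x\<bar>} = (\<integral>\<^sup>+x. ennreal (std_normal_density x) * indicator {x. a < \<bar>x\<bar>} x \<partial>lborel)"
    unfolding gauss_eq by (subst emeasure_density) (auto simp: mult.commute)
  also have "\<dots> \<le> (\<integral>\<^sup>+x. G x + G (- x) \<partial>lborel)"
  proof (intro nn_integral_mono)
    fix x :: real
    show "ennreal (std_normal_density x) * indicator {x. a < \<bar>x\<bar>} x \<le> G x + G (- x)"
    proof (cases "a < \<bar>x\<bar>")
      case True
      have d: "0 \<le> std_normal_density x" by (rule normal_density_nonneg)
      have "std_normal_density x \<le> \<bar>x\<bar> * std_normal_density x / a"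
        using True a d by (simp add: field_simps mult_right_mono)
      then show ?thesis using True a d unfolding G_def
        by (cases "x \<ge> 0") (auto simp: normal_density_def indicator_def intro!: ennreal_leI add_increasing add_increasing2)
    qed (simp add: indicator_def)
  qed
  also have "\<dots> = (\<integral>\<^sup>+x. G x \<partial>lborel) + (\<integral>\<^sup>+x. G (- x) \<partial>lborel)"
    using Gm by (intro nn_integral_add) auto
  also have "(\<integral>\<^sup>+x. G (- x) \<partial>lborel) = (\<integral>\<^sup>+x. G x \<partial>lborel)"
    using nn_integral_real_affine[OF Gm, of "-1" 0] by simp
  also have "(\<integral>\<^sup>+x. G x \<partial>lborel) = ennreal (exp (- a\<^sup>2 / 2) / (a * sqrt (2 * pi)))"
    unfolding G_def using half_tail[OF a] by simp
  finally have "emeasure gauss {x. a < \<bar>x\<bar>} \<le> ennreal (exp (- a\<^sup>2 / 2) / (a * sqrt (2 * pi))) + ennreal (exp (- a\<^sup>2 / 2) / (a * sqrt (2 * pi)))" .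
  also have "\<dots> = ennreal (2 * (exp (- a\<^sup>2 / 2) / (a * sqrt (2 * pi))))"
    using a by (subst ennreal_plus[symmetric]) auto
  finally show ?thesis .
qed

lemma gauss_le_1: "emeasure gauss A \<le> 1"
proof -
  interpret prob_space gauss by (rule prob_gauss)
  show ?thesis by (rule emeasure_le_1)
qed

lemma weak_phi:
  assumes L: "L > 0"
  shows "emeasure gauss {x. L < (1 + \<bar>x\<bar>) * exp (x\<^sup>2 / 2)} \<le> ennreal (4 / L)"
proof (cases "L \<le> 4")
  case True
  then have "1 \<le> 4 / L" using L by (simp add: field_simps)
  then have "ennreal 1 \<le> ennreal (4 / L)" by (rule ennreal_leI)
  then show ?thesis using gauss_le_1 by (metis ennreal_1 order_trans)
next
  case False
  define \<phi> where "\<phi> x = (1 + x) * exp (x\<^sup>2 / 2)" for x :: real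
  have e12: "exp (1/2::real) \<le> 2"
  proof -
    have "exp (1/2::real) \<le> exp 1" by simp
    also have "\<dots> \<le> 3" by (rule exp_le)
    finally have "exp (1/2::real) \<le> 3" .
    have "exp (1/2::real) * exp (1/2) = exp 1" by (simp flip: exp_add)
    also have "\<dots> \<le> 3" by (rule exp_le)
    finally have "exp (1/2::real) * exp (1/2) \<le> 3" .
    show ?thesis
    proof (rule ccontr)
      assume "\<not> ?thesis"
      then have "2 * 2 < exp (1/2::real) * exp (1/2)" by (intro mult_strict_mono) auto
      then show False using \<open>exp (1/2::real) * exp (1/2) \<le> 3\<close> by simp
    qed
  qed
  have mono: "\<phi> x \<le> \<phi> y" if "0 \<le> x" "x \<le> y" for x y
    unfolding \<phi>_def using that
    by (intro mult_mono) (auto intro: power_mono)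
  have "\<exists>a\<ge>1. a \<le> L \<and> \<phi> a = L"
  proof (rule IVT')
    show "\<phi> 1 \<le> L" using False e12 by (simp add: \<phi>_def)
    have "L \<le> (1 + L) * 1" by simp
    also have "\<dots> \<le> (1 + L) * exp (L\<^sup>2 / 2)" using L by (intro mult_left_mono) auto
    finally show "L \<le> \<phi> L" by (simp add: \<phi>_def)
    show "1 \<le> L" using False by simp
    show "continuous_on {1..L} \<phi>" unfolding \<phi>_def by (intro continuous_intros) auto
  qed
  then obtain a where a: "a \<ge> 1" "\<phi> a = L" by auto
  have sub: "{x. L < (1 + \<bar>x\<bar>) * exp (x\<^sup>2 / 2)} \<subseteq> {x. a < \<bar>x\<bar>}"
  proof safe
    fix x :: real assume "L < (1 + \<bar>x\<bar>) * exp (x\<^sup>2 / 2)"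
    then have "\<phi> a < \<phi> \<bar>x\<bar>" using a by (simp add: \<phi>_def)
    then show "a < \<bar>x\<bar>" using mono[of "\<bar>x\<bar>" a] by force
  qed
  have "emeasure gauss {x. L < (1 + \<bar>x\<bar>) * exp (x\<^sup>2 / 2)} \<le> emeasure gauss {x. a < \<bar>x\<bar>}"
    by (rule emeasure_mono[OF sub]) simp
  also have "\<dots> \<le> ennreal (2 * (exp (- a\<^sup>2 / 2) / (a * sqrt (2 * pi))))"
    using a by (intro gauss_tail) auto
  also have "\<dots> \<le> ennreal (4 / L)"
  proof (rule ennreal_leI)
    have sp: "1 \<le> sqrt (2 * pi)" using pi_gt3 by (simp add: real_le_rsqrt)
    have ex: "exp (- a\<^sup>2 / 2) * exp (a\<^sup>2 / 2) = 1" by (simp flip: exp_add)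
    have "2 * (exp (- a\<^sup>2 / 2) / (a * sqrt (2 * pi))) \<le> 2 * (exp (- a\<^sup>2 / 2) / a)"
      using a sp by (intro mult_left_mono divide_left_mono) (auto intro: mult_pos_pos)
    also have "\<dots> = 2 / (a * exp (a\<^sup>2 / 2))"
      using ex a by (simp add: field_simps)
    also have "\<dots> = 4 / (2 * a * exp (a\<^sup>2 / 2))" by simp
    also have "\<dots> \<le> 4 / ((1 + a) * exp (a\<^sup>2 / 2))"
      using a by (intro divide_left_mono mult_right_mono mult_pos_pos) auto
    also have "\<dots> = 4 / L" using a by (simp add: \<phi>_def)
    finally show "2 * (exp (- a\<^sup>2 / 2) / (a * sqrt (2 * pi))) \<le> 4 / L" .
  qed
  finally show ?thesis .
qed

fun vsum :: "(real \<Rightarrow> real) \<Rightarrow> real list \<Rightarrow> real" where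
  "vsum g (a # b # xs) = \<bar>g b - g a\<bar> + vsum g (b # xs)"
| "vsum g _ = 0"

lemma vsum_nonneg: "0 \<le> vsum g xs"
  by (induction g xs rule: vsum.induct) auto

lemma vsum_eq: "vsum g ts = (\<Sum>i\<in>{1..<length ts}. \<bar>g (ts ! i) - g (ts ! (i - 1))\<bar>)"
proof (induction g ts rule: vsum.induct)
  case (1 g a b xs)
  have eqS: "{1..<length (a # b # xs)} = insert 1 (Suc ` {1..<length (b # xs)})"
    by (auto simp: image_iff)
  have "(\<Sum>i\<in>{1..<length (a # b # xs)}. \<bar>g ((a # b # xs) ! i) - g ((a # b # xs) ! (i - 1))\<bar>)
      = \<bar>g b - g a\<bar> + (\<Sum>i\<in>Suc ` {1..<length (b # xs)}. \<bar>g ((a # b # xs) ! i) - g ((a # b # xs) ! (i - 1))\<bar>)"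
    unfolding eqS by (subst sum.insert) auto
  also have "(\<Sum>i\<in>Suc ` {1..<length (b # xs)}. \<bar>g ((a # b # xs) ! i) - g ((a # b # xs) ! (i - 1))\<bar>)
      = (\<Sum>i\<in>{1..<length (b # xs)}. \<bar>g ((b # xs) ! i) - g ((b # xs) ! (i - 1))\<bar>)"
    by (subst sum.reindex) (auto intro!: sum.cong simp: nth_Cons')
  finally show ?case using 1 by simp
qed auto

lemma vsum_append_le:
  assumes "\<forall>t\<in>set (xs @ ys). \<bar>g t\<bar> \<le> M" "0 \<le> M"
  shows "vsum g (xs @ ys) \<le> vsum g xs + vsum g ys + 2 * M"
  using assms
proof (induction g xs rule: vsum.induct)
  case (1 g a b xs)
  then show ?case by simp
next
  case ("2_1" g)
  then show ?case using vsum_nonneg[of g ys] by simp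
next
  case ("2_2" g a)
  then show ?case
  proof (cases ys)
    case (Cons y ys')
    have "\<bar>g y - g a\<bar> \<le> 2 * M" using "2_2" Cons by (auto simp: abs_le_iff) 
    then show ?thesis using Cons by simp
  qed simp
qed

lemma vsum_mono_piece:
  assumes "sorted_wrt (<) ts" "\<forall>a\<in>set ts. \<forall>b\<in>set ts. a \<le> b \<longrightarrow> g a \<le> g b"
  shows "vsum g ts = (if ts = [] then 0 else g (last ts) - g (hd ts))"
  using assms
proof (induction g ts rule: vsum.induct)
  case (1 g a b xs)
  have "g a \<le> g b" using 1(3) 1(2) by auto
  have "g b \<le> g (last (b # xs))" using 1(3) 1(2) by (auto simp: sorted_wrt_append) (metis last_in_set list.distinct(1) order_less_imp_le)
  then show ?case using 1 \<open>g a \<le> g b\<close> by auto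
qed auto

lemma vsum_mono_bound:
  assumes "sorted_wrt (<) ts" "(\<forall>a\<in>set ts. \<forall>b\<in>set ts. a \<le> b \<longrightarrow> g a \<le> g b) \<or> (\<forall>a\<in>set ts. \<forall>b\<in>set ts. a \<le> b \<longrightarrow> g b \<le> g a)"
    "\<forall>t\<in>set ts. \<bar>g t\<bar> \<le> M" "0 \<le> M"
  shows "vsum g ts \<le> 2 * M"
proof (cases "ts = []")
  case False
  have h: "\<bar>g (last ts)\<bar> \<le> M" "\<bar>g (hd ts)\<bar> \<le> M" using assms(3) False by auto
  show ?thesis using assms(2)
  proof
    assume "\<forall>a\<in>set ts. \<forall>b\<in>set ts. a \<le> b \<longrightarrow> g a \<le> g b"
    then show ?thesis using vsum_mono_piece[OF assms(1)] False h by (auto simp: abs_le_iff)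
  next
    assume m: "\<forall>a\<in>set ts. \<forall>b\<in>set ts. a \<le> b \<longrightarrow> g b \<le> g a"
    have "vsum (\<lambda>t. - g t) ts = (if ts = [] then 0 else - g (last ts) - - g (hd ts))"
      by (rule vsum_mono_piece[OF assms(1)]) (use m in auto)
    moreover have "vsum (\<lambda>t. - g t) ts = vsum g ts"
      by (induction g ts rule: vsum.induct) (auto simp: abs_minus_commute)
    ultimately show ?thesis using False h by (auto simp: abs_le_iff)
  qed
qed (use assms(4) in simp)

definition mon :: "(real \<Rightarrow> real) \<Rightarrow> real set \<Rightarrow> bool" where
  "mon g J \<longleftrightarrow> (\<forall>a\<in>J. \<forall>b\<in>J. a \<le> b \<longrightarrow> g a \<le> g b) \<or> (\<forall>a\<in>J. \<forall>b\<in>J. a \<le> b \<longrightarrow> g b \<le> g a)"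

lemma dropWhile_le_gt:
  "sorted_wrt (<) l \<Longrightarrow> t \<in> set (dropWhile (\<lambda>t. t \<le> z) l) \<Longrightarrow> z < (t::real)"
proof (induction l)
  case (Cons a l)
  show ?case
  proof (cases "a \<le> z")
    case True then show ?thesis using Cons by auto
  next
    case False then show ?thesis using Cons by auto
  qed
qed simp

lemma vsum_single: "sorted_wrt (<) l \<Longrightarrow> set l \<subseteq> {z} \<Longrightarrow> vsum g l = 0"
  by (induction g l rule: vsum.induct) auto

lemma var_bound:
  assumes "finite Z"
  shows "\<And>I ts. is_interval (I::real set) \<Longrightarrow> (\<forall>t\<in>I. \<bar>g t\<bar> \<le> M) \<Longrightarrow> 0 \<le> M \<Longrightarrow>
     (\<forall>J. is_interval J \<longrightarrow> J \<subseteq> I - Z \<longrightarrow> mon g J) \<Longrightarrow> sorted_wrt (<) ts \<Longrightarrow> set ts \<subseteq> I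
     \<Longrightarrow> vsum g ts \<le> 2 * 4 ^ card Z * M"
  using assms
proof (induction Z rule: finite_induct)
  case empty
  have "mon g I" using empty by auto
  then have "mon g (set ts)" using empty(6) unfolding mon_def by blast
  have bb: "\<forall>t\<in>set ts. \<bar>g t\<bar> \<le> M" using empty by auto
  show ?case using vsum_mono_bound[of ts g M] \<open>mon g (set ts)\<close> empty(3,5) bb unfolding mon_def by simp
next
  case (insert z F)
  define xs where "xs = takeWhile (\<lambda>t. t < z) ts"
  define ys where "ys = dropWhile (\<lambda>t. t < z) ts"
  define mid where "mid = takeWhile (\<lambda>t. t \<le> z) ys"
  define ys2 where "ys2 = dropWhile (\<lambda>t. t \<le> z) ys"
  have ts: "ts = xs @ ys" unfolding xs_def ys_def by simp
  have ys: "ys = mid @ ys2" unfolding mid_def ys2_def by simp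
  have sx: "sorted_wrt (<) xs" and sy: "sorted_wrt (<) ys"
    using insert.prems(5) ts by (simp_all add: sorted_wrt_append)
  have sm: "sorted_wrt (<) mid" and sy2: "sorted_wrt (<) ys2"
    using sy ys by (simp_all add: sorted_wrt_append)
  have bound: "\<forall>t\<in>set ts. \<bar>g t\<bar> \<le> M" using insert.prems(2,6) by auto
  have mid_z: "set mid \<subseteq> {z}"
  proof
    fix t assume t: "t \<in> set mid"
    then have "t \<le> z" unfolding mid_def by (auto dest: set_takeWhileD)
    moreover have "t \<in> set ys" using t unfolding mid_def by (auto dest: set_takeWhileD)
    then have "\<not> t < z"
    proof -
      assume "t \<in> set ys"
      show "\<not> t < z"
      proof
        assume tz: "t < z"
        have "ys \<noteq> []" using \<open>t \<in> set ys\<close> by auto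
        then have h: "\<not> hd ys < z" unfolding ys_def using hd_dropWhile by blast
        have "hd ys \<le> t" using sy \<open>t \<in> set ys\<close> by (cases ys) auto
        then show False using h tz by simp
      qed
    qed
    ultimately show "t \<in> {z}" by simp
  qed
  have vm: "vsum g mid = 0" by (rule vsum_single[OF sm mid_z])
  define I1 where "I1 = I \<inter> {..<z}"
  define I2 where "I2 = I \<inter> {z<..}"
  have "is_interval {..<z}" "is_interval {z<..}" unfolding is_interval_1 by auto
  then have i1: "is_interval I1" and i2: "is_interval I2"
    using insert.prems(1) unfolding I1_def I2_def by (auto intro: is_interval_Int)
  have b1: "vsum g xs \<le> 2 * 4 ^ card F * M"
  proof (rule insert.IH[OF i1 _ insert.prems(3) _ sx])
    show "\<forall>t\<in>I1. \<bar>g t\<bar> \<le> M" using insert.prems(2) by (auto simp: I1_def)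
    show "\<forall>J. is_interval J \<longrightarrow> J \<subseteq> I1 - F \<longrightarrow> mon g J" using insert.prems(4) by (auto simp: I1_def)
    show "set xs \<subseteq> I1" using insert.prems(6) unfolding xs_def I1_def by (auto dest: set_takeWhileD)
  qed
  have b2: "vsum g ys2 \<le> 2 * 4 ^ card F * M"
  proof (rule insert.IH[OF i2 _ insert.prems(3) _ sy2])
    show "\<forall>t\<in>I2. \<bar>g t\<bar> \<le> M" using insert.prems(2) by (auto simp: I2_def)
    show "\<forall>J. is_interval J \<longrightarrow> J \<subseteq> I2 - F \<longrightarrow> mon g J" using insert.prems(4) by (auto simp: I2_def)
    have "set ys2 \<subseteq> {z<..}" using dropWhile_le_gt[OF sy] unfolding ys2_def by auto
    moreover have "set ys2 \<subseteq> I" using insert.prems(6) unfolding ys2_def ys_def by (auto dest: set_dropWhileD)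
    ultimately show "set ys2 \<subseteq> I2" unfolding I2_def by auto
  qed
  have "vsum g ts \<le> vsum g xs + vsum g ys + 2 * M"
    unfolding ts by (rule vsum_append_le) (use bound ts insert.prems(3) in auto)
  also have "vsum g ys \<le> vsum g mid + vsum g ys2 + 2 * M"
    unfolding ys by (rule vsum_append_le) (use bound ts ys insert.prems(3) in auto)
  finally have "vsum g ts \<le> vsum g xs + (vsum g mid + vsum g ys2 + 2 * M) + 2 * M" by simp
  then have "vsum g ts \<le> 2 * 4 ^ card F * M + 2 * 4 ^ card F * M + 4 * M"
    using vm b1 b2 by linarith
  also have "\<dots> \<le> 2 * 4 ^ card (insert z F) * M"
  proof -
    have "1 \<le> (4::real) ^ card F" by simp
    then have "4 * M \<le> 4 * 4 ^ card F * M" using insert.prems(3) by (simp add: mult_right_mono)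
    then show ?thesis using insert(1,2) by (simp add: mult.commute)
  qed
  finally show ?case .
qed

lemma Qbound:
  fixes s d y :: real
  assumes s: "0 < s" and y: "1 \<le> y" and dd: "s < 1 / (20 * y\<^sup>2) \<Longrightarrow> 1 / (12 * y) \<le> \<bar>d\<bar>"
  shows "1 / sqrt s * exp (- (1/2) * d\<^sup>2 / s) \<le> 288 * y"
proof (cases "s < 1 / (20 * y\<^sup>2)")
  case False
  then have "1 / (20 * y\<^sup>2) \<le> s" by simp
  then have "sqrt (1 / (20 * y\<^sup>2)) \<le> sqrt s" by (rule real_sqrt_le_mono)
  moreover have "sqrt (1 / (20 * y\<^sup>2)) = 1 / (sqrt 20 * y)"
    using y by (simp add: real_sqrt_divide real_sqrt_mult)
  ultimately have "1 / (sqrt 20 * y) \<le> sqrt s" by simp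
  then have "1 / sqrt s \<le> sqrt 20 * y" using s y
    by (simp add: field_simps)
  moreover have "sqrt 20 \<le> (5::real)" by (simp add: real_sqrt_le_iff')
  moreover have "exp (- (1/2) * d\<^sup>2 / s) \<le> 1" using s by simp
  ultimately have "1 / sqrt s * exp (- (1/2) * d\<^sup>2 / s) \<le> (5 * y) * 1"
    using y s by (intro mult_mono) (auto intro: order_trans mult_right_mono)
  then show ?thesis using y by simp
next
  case True
  have d: "1 / (12 * y) \<le> \<bar>d\<bar>" using dd True .
  have "0 < 1 / (12 * y)" using y by simp
  then have "d \<noteq> 0" using d by auto
  then have dpos: "0 < d\<^sup>2" by simp
  have "exp (d\<^sup>2 / (2 * s)) \<ge> d\<^sup>2 / (2 * s)"
    using exp_ge_add_one_self[of "d\<^sup>2 / (2 * s)"] by linarith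
  then have e: "exp (- (1/2) * d\<^sup>2 / s) \<le> 2 * s / d\<^sup>2"
    using s dpos by (simp add: exp_minus field_simps)
  have ss: "sqrt s < 1 / y"
  proof -
    have "s < 1 / y\<^sup>2" using True y by (smt (verit) divide_left_mono mult_pos_pos zero_less_power)
    then have "sqrt s < sqrt (1 / y\<^sup>2)" by (rule real_sqrt_less_mono)
    then show ?thesis using y by (simp add: real_sqrt_divide)
  qed
  have "1 / sqrt s * exp (- (1/2) * d\<^sup>2 / s) \<le> 1 / sqrt s * (2 * s / d\<^sup>2)"
    using s e by (intro mult_left_mono) auto
  also have "\<dots> = 2 * sqrt s / d\<^sup>2"
  proof -
    have "1 / sqrt s * (2 * s / d\<^sup>2) = 2 * (s / sqrt s) / d\<^sup>2" by simp
    also have "s / sqrt s = sqrt s" using s by (simp add: real_div_sqrt)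
    finally show ?thesis .
  qed
  also have "\<dots> \<le> 2 * (1 / y) / (1 / (12 * y))\<^sup>2"
  proof (intro divide_mono mult_left_mono)
    have "(1 / (12 * y))\<^sup>2 \<le> \<bar>d\<bar>\<^sup>2" using d y by (intro power_mono) auto
    then show "(1 / (12 * y))\<^sup>2 \<le> d\<^sup>2" by simp
  qed (use ss y s in auto)
  also have "\<dots> = 288 * y" using y by (simp add: field_simps power2_eq_square)
  finally show ?thesis .
qed

lemma t_le_s: fixes t :: real assumes "0 < t" "t \<le> 1" shows "2 * t / 3 \<le> 1 - exp (-2 * t)"
proof -
  have e: "1 + 2 * t \<le> exp (2 * t)" using exp_ge_add_one_self[of "2*t"] by simp
  have "exp (-2 * t) = 1 / exp (2 * t)" by (simp add: exp_minus field_simps)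
  also have "\<dots> \<le> 1 / (1 + 2 * t)" using e assms by (intro divide_left_mono) auto
  finally have "exp (-2 * t) \<le> 1 / (1 + 2 * t)" .
  moreover have "2 * t / 3 \<le> 1 - 1 / (1 + 2 * t)" using assms by (simp add: field_simps)
  ultimately show ?thesis by linarith
qed

lemma s_pos: "0 < t \<Longrightarrow> 0 < 1 - exp (-2 * (t::real))" by simp

lemma Dbound:
  fixes t x u :: real
  assumes t: "0 < t" "t \<le> 1" and c: "1/2 \<le> (1 + \<bar>x\<bar>) * \<bar>x - u\<bar>"
    and small: "1 - exp (-2 * t) < 1 / (20 * (1 + \<bar>x\<bar>)\<^sup>2)"
  shows "1 / (12 * (1 + \<bar>x\<bar>)) \<le> \<bar>exp (- t) * u - x\<bar>"
proof -
  define y where "y = 1 + \<bar>x\<bar>"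
  have y: "1 \<le> y" "\<bar>x\<bar> \<le> y" by (auto simp: y_def)
  have e3: "1/3 \<le> exp (- t)"
  proof -
    have "exp t \<le> exp 1" using t by simp
    also have "\<dots> \<le> 3" by (rule exp_le)
    finally have "exp t \<le> 3" .
    then show ?thesis by (simp add: exp_minus field_simps)
  qed
  have e1: "1 - exp (- t) \<le> t" using exp_ge_add_one_self[of "-t"] by simp
  have e0: "exp (- t) \<le> 1" using t by simp
  have ux: "1 / (2 * y) \<le> \<bar>u - x\<bar>" using c y by (simp add: y_def field_simps abs_minus_commute)
  have ts: "t \<le> 3 / (40 * y\<^sup>2)"
  proof -
    have "2 * t / 3 < 1 / (20 * y\<^sup>2)" using t_le_s[OF t] small unfolding y_def by linarith
    then show ?thesis using y by (simp add: field_simps)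
  qed
  have "exp (- t) * u - x = exp (- t) * (u - x) - (1 - exp (- t)) * x" by (simp add: algebra_simps)
  then have "\<bar>exp (- t) * u - x\<bar> \<ge> \<bar>exp (- t) * (u - x)\<bar> - \<bar>(1 - exp (- t)) * x\<bar>"
    using abs_triangle_ineq2[of "exp (- t) * (u - x)" "(1 - exp (- t)) * x"] by simp
  moreover have "\<bar>exp (- t) * (u - x)\<bar> = exp (- t) * \<bar>u - x\<bar>" by (simp add: abs_mult)
  moreover have "\<bar>(1 - exp (- t)) * x\<bar> = (1 - exp (- t)) * \<bar>x\<bar>" using e0 by (simp add: abs_mult)
  ultimately have "\<bar>exp (- t) * u - x\<bar> \<ge> exp (- t) * \<bar>u - x\<bar> - (1 - exp (- t)) * \<bar>x\<bar>" by simp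
  moreover have "exp (- t) * \<bar>u - x\<bar> \<ge> 1/3 * (1 / (2 * y))"
    using e3 ux y by (intro mult_mono) auto
  moreover have "(1 - exp (- t)) * \<bar>x\<bar> \<le> 3 / (40 * y\<^sup>2) * y"
    using e1 ts y e0 by (intro mult_mono) auto
  moreover have "3 / (40 * y\<^sup>2) * y = 3 / (40 * y)" using y by (simp add: power2_eq_square)
  moreover have "1 / (12 * y) \<le> 1/3 * (1 / (2 * y)) - 3 / (40 * y)" using y by (simp add: field_simps)
  ultimately show ?thesis unfolding y_def by linarith
qed

lemma K_sup:
  assumes t: "0 < t" "t \<le> 1" and c: "1/2 \<le> (1 + \<bar>x\<bar>) * \<bar>x - u\<bar>"
  shows "K t x u \<le> 288 * (1 + \<bar>x\<bar>) * exp (R x)"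
proof -
  have "1 / sqrt (1 - exp (-2 * t)) * exp (- (1/2) * (exp (- t) * u - x)\<^sup>2 / (1 - exp (-2 * t))) \<le> 288 * (1 + \<bar>x\<bar>)"
    by (rule Qbound) (use t Dbound[OF t c] in auto)
  then have "exp (R x) * (1 / sqrt (1 - exp (-2 * t)) * exp (- (1/2) * (exp (- t) * u - x)\<^sup>2 / (1 - exp (-2 * t))))
     \<le> exp (R x) * (288 * (1 + \<bar>x\<bar>))" by (intro mult_left_mono) auto
  then show ?thesis unfolding K_def by (simp add: ac_simps)
qed

lemma K_nonneg: "0 < t \<Longrightarrow> 0 \<le> K t x u"
  unfolding K_def by (intro mult_nonneg_nonneg divide_nonneg_nonneg) auto

definition Pw :: "real \<Rightarrow> real \<Rightarrow> real \<Rightarrow> real" where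
  "Pw x u w = w ^ 3 - u * x * w\<^sup>2 + (u\<^sup>2 + x\<^sup>2 - 1) * w - u * x"

definition ell :: "real \<Rightarrow> real \<Rightarrow> real \<Rightarrow> real" where
  "ell x u t = - ln (1 - (exp (- t))\<^sup>2) / 2 - (exp (- t) * u - x)\<^sup>2 / (2 * (1 - (exp (- t))\<^sup>2))"

lemma exp2: "exp (-2 * (t::real)) = (exp (- t))\<^sup>2"
  by (simp add: power2_eq_square flip: exp_add)

lemma K_ell: assumes "0 < t" shows "K t x u = exp (R x) * exp (ell x u t)"
proof -
  define S where "S = 1 - (exp (- t))\<^sup>2"
  define B where "B = (exp (- t) * u - x)\<^sup>2 / (2 * S)"
  have s: "0 < S" using assms unfolding S_def by (simp flip: exp2)
  have sq: "sqrt S = exp (ln S / 2)"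
    using s by (simp add: powr_half_sqrt[symmetric] powr_def)
  have "exp (ell x u t) = exp (- ln S / 2 - B)"
    unfolding ell_def S_def B_def by simp
  also have "\<dots> = exp (- ln S / 2) / exp B" by (rule exp_diff)
  also have "exp (- ln S / 2) = 1 / sqrt S"
    unfolding sq by (simp add: exp_minus inverse_eq_divide)
  finally have e1: "exp (ell x u t) = 1 / sqrt S / exp B" .
  have "- (1/2) * (exp (- t) * u - x)\<^sup>2 / S = - B" unfolding B_def by simp
  then have e2: "exp (- (1/2) * (exp (- t) * u - x)\<^sup>2 / S) = 1 / exp B" by (simp add: exp_minus inverse_eq_divide)
  have "K t x u = exp (R x) / sqrt S * exp (- (1/2) * (exp (- t) * u - x)\<^sup>2 / S)"
    unfolding K_def S_def exp2 ..
  also have "\<dots> = exp (R x) * exp (ell x u t)" unfolding e1 e2 by simp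
  finally show ?thesis .
qed

definition Lw :: "real \<Rightarrow> real \<Rightarrow> real \<Rightarrow> real" where
  "Lw x u w = - ln (1 - w\<^sup>2) / 2 - (w * u - x)\<^sup>2 / (2 * (1 - w\<^sup>2))"

definition Dw :: "real \<Rightarrow> real \<Rightarrow> real \<Rightarrow> real" where
  "Dw x u w = (w * (1 - w\<^sup>2) - (w * u - x) * u * (1 - w\<^sup>2) - (w * u - x)\<^sup>2 * w) / (1 - w\<^sup>2)\<^sup>2"

lemma Dw_alg0:
  fixes s w u a :: real
  assumes "s \<noteq> 0"
  shows "- ((-(2 * w)) / s) / 2 - ((2 * a * u) * (2 * s) - a\<^sup>2 * (- (4 * w))) / ((2 * s) * (2 * s))
    = (w * s - a * u * s - a\<^sup>2 * w) / s\<^sup>2"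
proof -
  have l: "- ((-(2 * w)) / s) / 2 - ((2 * a * u) * (2 * s) - a\<^sup>2 * (- (4 * w))) / ((2 * s) * (2 * s))
     = w / s - a * u / s - a\<^sup>2 * w / s\<^sup>2"
    using assms by (simp add: diff_divide_distrib add_divide_distrib power2_eq_square)
  have r: "(w * s - a * u * s - a\<^sup>2 * w) / s\<^sup>2 = w / s - a * u / s - a\<^sup>2 * w / s\<^sup>2"
    using assms by (simp add: diff_divide_distrib power2_eq_square)
  show ?thesis using l r by simp
qed

lemma Dw_alg:
  fixes s w u x :: real
  assumes "s \<noteq> 0"
  shows "- ((-(2 * w)) / s) / 2 - ((2 * (w * u - x) * u) * (2 * s) - (w * u - x)\<^sup>2 * (- (4 * w))) / ((2 * s) * (2 * s))
    = (w * s - (w * u - x) * u * s - (w * u - x)\<^sup>2 * w) / s\<^sup>2"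
  by (rule Dw_alg0[OF assms])

lemma Lw_deriv:
  assumes s: "0 < 1 - w\<^sup>2"
  shows "(Lw x u has_real_derivative Dw x u w) (at w)"
proof -
  have sne: "1 - w\<^sup>2 \<noteq> 0" using s by simp
  have d0: "((\<lambda>w. 1 - w\<^sup>2) has_real_derivative - (2 * w)) (at w)"
    by (auto intro!: derivative_eq_intros)
  have d1: "((\<lambda>w. ln (1 - w\<^sup>2)) has_real_derivative (- (2 * w)) / (1 - w\<^sup>2)) (at w)"
    by (rule DERIV_cong[OF DERIV_chain2[OF DERIV_ln_divide[OF s] d0]]) simp
  have d2: "((\<lambda>w. (w * u - x)\<^sup>2) has_real_derivative 2 * (w * u - x) * u) (at w)"
    by (auto intro!: derivative_eq_intros)
  have d3: "((\<lambda>w. 2 * (1 - w\<^sup>2)) has_real_derivative - (4 * w)) (at w)"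
    by (auto intro!: derivative_eq_intros)
  have d4: "((\<lambda>w. (w * u - x)\<^sup>2 / (2 * (1 - w\<^sup>2))) has_real_derivative
      ((2 * (w * u - x) * u) * (2 * (1 - w\<^sup>2)) - (w * u - x)\<^sup>2 * (- (4 * w))) / ((2 * (1 - w\<^sup>2)) * (2 * (1 - w\<^sup>2)))) (at w)"
    by (rule DERIV_divide[OF d2 d3]) (use s in simp)
  have d5: "((\<lambda>w. - ln (1 - w\<^sup>2) / 2) has_real_derivative - ((- (2 * w)) / (1 - w\<^sup>2)) / 2) (at w)"
    by (rule DERIV_cdivide[OF DERIV_minus[OF d1]])
  have dd: "(Lw x u has_real_derivative
      - ((- (2 * w)) / (1 - w\<^sup>2)) / 2 - ((2 * (w * u - x) * u) * (2 * (1 - w\<^sup>2)) - (w * u - x)\<^sup>2 * (- (4 * w))) / ((2 * (1 - w\<^sup>2)) * (2 * (1 - w\<^sup>2)))) (at w)"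
    unfolding Lw_def[abs_def] by (rule DERIV_diff[OF d5 d4])
  have eq: "- ((- (2 * w)) / (1 - w\<^sup>2)) / 2 - ((2 * (w * u - x) * u) * (2 * (1 - w\<^sup>2)) - (w * u - x)\<^sup>2 * (- (4 * w))) / ((2 * (1 - w\<^sup>2)) * (2 * (1 - w\<^sup>2)))
      = Dw x u w"
    unfolding Dw_def by (fact Dw_alg[OF sne])
  show ?thesis by (rule DERIV_cong[OF dd eq])
qed

lemma ell_Lw: "ell x u t = Lw x u (exp (- t))"
  unfolding ell_def Lw_def ..

lemma Pw_alg: "- (w * (1 - w\<^sup>2) - (w * u - x) * u * (1 - w\<^sup>2) - (w * u - x)\<^sup>2 * w) = Pw x u w"
  unfolding Pw_def by (simp add: algebra_simps power2_eq_square power3_eq_cube)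

lemma gen_div: "(n::real) / d * (- w) = w * (- n) / d"
  by simp

lemma gen_pos: "0 < (w::real) / d \<Longrightarrow> 0 < p \<Longrightarrow> 0 \<le> w * p / d"
  using mult_pos_pos[of "w / d" p] by simp

lemma gen_neg: "0 < (w::real) / d \<Longrightarrow> p < 0 \<Longrightarrow> w * p / d \<le> 0"
  using mult_pos_neg[of "w / d" p] by simp

lemma ell_deriv:
  assumes t: "0 < t"
  shows "(ell x u has_real_derivative exp (- t) * Pw x u (exp (- t)) / (1 - (exp (- t))\<^sup>2)\<^sup>2) (at t)"
proof -
  have s: "0 < 1 - (exp (- t))\<^sup>2" using t by (simp flip: exp2)
  have de: "((\<lambda>t. exp (- t)) has_real_derivative - exp (- t)) (at t)"
    by (auto intro!: derivative_eq_intros)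
  have "((\<lambda>t. Lw x u (exp (- t))) has_real_derivative Dw x u (exp (- t)) * (- exp (- t))) (at t)"
    by (rule DERIV_chain2[OF Lw_deriv[OF s] de])
  moreover have "Dw x u (exp (- t)) * (- exp (- t)) = exp (- t) * Pw x u (exp (- t)) / (1 - (exp (- t))\<^sup>2)\<^sup>2"
    unfolding Dw_def Pw_alg[symmetric] by (rule gen_div)
  ultimately show ?thesis unfolding ell_Lw[abs_def] by simp
qed

lemma sign_const:
  fixes q :: "real \<Rightarrow> real"
  assumes c: "continuous_on UNIV q" and J: "is_interval J" and nz: "\<forall>t\<in>J. q t \<noteq> 0"
  shows "(\<forall>t\<in>J. 0 < q t) \<or> (\<forall>t\<in>J. q t < 0)"
proof (rule ccontr)
  assume "\<not> ?thesis"
  then obtain a b where ab0: "a \<in> J" "b \<in> J" "\<not> 0 < q a" "\<not> q b < 0"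
    by blast
  then have ab: "a \<in> J" "b \<in> J" "q a < 0" "0 < q b" using nz by force+
  have cc: "continuous_on {x..y} q" for x y using c by (rule continuous_on_subset) auto
  have "\<exists>c. min a b \<le> c \<and> c \<le> max a b \<and> q c = 0"
  proof (cases "a \<le> b")
    case True
    then show ?thesis using IVT'[of q a 0 b, OF _ _ True cc] ab by (auto simp: min_def max_def)
  next
    case False
    then show ?thesis using IVT2'[of q a 0 b, OF _ _ _ cc] ab by (auto simp: min_def max_def)
  qed
  then obtain c where "min a b \<le> c" "c \<le> max a b" "q c = 0" by auto
  moreover have "c \<in> J"
  proof -
    have iv: "\<And>p r z. p \<in> J \<Longrightarrow> r \<in> J \<Longrightarrow> p \<le> z \<Longrightarrow> z \<le> r \<Longrightarrow> z \<in> J"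
      using J unfolding is_interval_1 by blast
    show ?thesis
    proof (cases "a \<le> b")
      case True
      then show ?thesis using iv[of a b c] ab(1,2) \<open>min a b \<le> c\<close> \<open>c \<le> max a b\<close> by simp
    next
      case False
      then show ?thesis using iv[of b a c] ab(1,2) \<open>min a b \<le> c\<close> \<open>c \<le> max a b\<close> by simp
    qed
  qed
  ultimately show False using nz by auto
qed

lemma mono_K:
  assumes J: "is_interval J" "J \<subseteq> {0<..}" and nz: "\<forall>t\<in>J. Pw x u (exp (- t)) \<noteq> 0"
  shows "mon (\<lambda>t. K t x u) J"
proof -
  have cq: "continuous_on UNIV (\<lambda>t. Pw x u (exp (- t)))"
    unfolding Pw_def by (intro continuous_intros)
  have der: "DERIV (ell x u) t :> exp (- t) * Pw x u (exp (- t)) / (1 - (exp (- t))\<^sup>2)\<^sup>2" if "t \<in> J" for t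
    using ell_deriv[of t] J that by auto
  have iv: "\<And>p r z. p \<in> J \<Longrightarrow> r \<in> J \<Longrightarrow> p \<le> z \<Longrightarrow> z \<le> r \<Longrightarrow> z \<in> J"
    using J(1) unfolding is_interval_1 by blast
  have sub: "{a..b} \<subseteq> J" if "a \<in> J" "b \<in> J" for a b using iv[OF that] by auto
  have dpos: "0 < exp (- t) / (1 - (exp (- t))\<^sup>2)\<^sup>2" if "t \<in> J" for t
  proof -
    have "0 < t" using J that by auto
    then have "0 < 1 - (exp (- t))\<^sup>2" by (simp flip: exp2)
    then show ?thesis by simp
  qed
  from sign_const[OF cq J(1) nz] show ?thesis
  proof
    assume pos: "\<forall>t\<in>J. 0 < Pw x u (exp (- t))"
    have "\<forall>a\<in>J. \<forall>b\<in>J. a \<le> b \<longrightarrow> K a x u \<le> K b x u"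
    proof safe
      fix a b assume ab: "a \<in> J" "b \<in> J" "a \<le> b"
      have "ell x u a \<le> ell x u b"
      proof (rule DERIV_nonneg_imp_nondecreasing[OF ab(3)])
        fix y assume "a \<le> y" "y \<le> b"
        then have y: "y \<in> J" using sub[OF ab(1,2)] by auto
        have "0 \<le> exp (- y) * Pw x u (exp (- y)) / (1 - (exp (- y))\<^sup>2)\<^sup>2"
          using pos y dpos[OF y] by (intro gen_pos) auto
        then show "\<exists>d. DERIV (ell x u) y :> d \<and> 0 \<le> d" using der[OF y] by blast
      qed
      then show "K a x u \<le> K b x u" using ab J by (auto simp: K_ell)
    qed
    then show ?thesis unfolding mon_def by blast
  next
    assume neg: "\<forall>t\<in>J. Pw x u (exp (- t)) < 0"
    have "\<forall>a\<in>J. \<forall>b\<in>J. a \<le> b \<longrightarrow> K b x u \<le> K a x u"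
    proof safe
      fix a b assume ab: "a \<in> J" "b \<in> J" "a \<le> b"
      have "ell x u b \<le> ell x u a"
      proof (rule DERIV_nonpos_imp_nonincreasing[OF ab(3)])
        fix y assume "a \<le> y" "y \<le> b"
        then have y: "y \<in> J" using sub[OF ab(1,2)] by auto
        have "exp (- y) * Pw x u (exp (- y)) / (1 - (exp (- y))\<^sup>2)\<^sup>2 \<le> 0"
          using neg y dpos[OF y] by (intro gen_neg) auto
        then show "\<exists>d. DERIV (ell x u) y :> d \<and> d \<le> 0" using der[OF y] by blast
      qed
      then show "K b x u \<le> K a x u" using ab J by (auto simp: K_ell)
    qed
    then show ?thesis unfolding mon_def by blast
  qed
qed

lemma Z_fin_card:
  "finite {t. Pw x u (exp (- t)) = 0} \<and> card {t. Pw x u (exp (- t)) = 0} \<le> 3"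
proof -
  define p :: "real poly" where "p = [:-(u*x), u\<^sup>2 + x\<^sup>2 - 1, -(u*x), 1:]"
  have pe: "poly p w = Pw x u w" for w
    unfolding p_def Pw_def by (simp add: algebra_simps power2_eq_square power3_eq_cube)
  have p0: "p \<noteq> 0" unfolding p_def by simp
  have dp: "degree p \<le> 3" unfolding p_def by (simp add: degree_pCons_eq_if)
  have sub: "{t. Pw x u (exp (- t)) = 0} \<subseteq> (\<lambda>w. - ln w) ` {w. poly p w = 0}"
  proof
    fix t assume "t \<in> {t. Pw x u (exp (- t)) = 0}"
    then have "exp (- t) \<in> {w. poly p w = 0}" by (simp add: pe)
    moreover have "t = - ln (exp (- t))" by simp
    ultimately show "t \<in> (\<lambda>w. - ln w) ` {w. poly p w = 0}" by blast
  qed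
  have fr: "finite {w. poly p w = 0}" by (rule poly_roots_finite[OF p0])
  have "finite {t. Pw x u (exp (- t)) = 0}" using sub fr by (rule finite_subset[OF _ finite_imageI])
  moreover have "card {t. Pw x u (exp (- t)) = 0} \<le> card ((\<lambda>w. - ln w) ` {w. poly p w = 0})"
    using sub fr by (intro card_mono finite_imageI)
  moreover have "card ((\<lambda>w. - ln w) ` {w. poly p w = 0}) \<le> card {w. poly p w = 0}"
    by (rule card_image_le[OF fr])
  moreover have "card {w. poly p w = 0} \<le> degree p" by (rule card_poly_roots_bound[OF p0])
  ultimately show ?thesis using dp by linarith
qed

lemma K_var:
  assumes c: "1/2 \<le> (1 + \<bar>x\<bar>) * \<bar>x - u\<bar>"
    and ts: "sorted_wrt (<) ts" "set ts \<subseteq> {0<..1}"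
  shows "vsum (\<lambda>t. K t x u) ts \<le> 128 * (288 * (1 + \<bar>x\<bar>) * exp (R x))"
proof -
  define Z where "Z = {t. Pw x u (exp (- t)) = 0}"
  define M where "M = 288 * (1 + \<bar>x\<bar>) * exp (R x)"
  have Zf: "finite Z" and Zc: "card Z \<le> 3" using Z_fin_card unfolding Z_def by auto
  have M0: "0 \<le> M" unfolding M_def by simp
  have "vsum (\<lambda>t. K t x u) ts \<le> 2 * 4 ^ card Z * M"
  proof (rule var_bound[OF Zf _ _ M0 _ ts])
    show "is_interval {0<..1::real}" unfolding is_interval_1 by auto
    show "\<forall>t\<in>{0<..1}. \<bar>K t x u\<bar> \<le> M"
      using K_sup[OF _ _ c] K_nonneg unfolding M_def by fastforce
    show "\<forall>J. is_interval J \<longrightarrow> J \<subseteq> {0<..1} - Z \<longrightarrow> mon (\<lambda>t. K t x u) J"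
    proof (intro allI impI)
      fix J :: "real set" assume J: "is_interval J" "J \<subseteq> {0<..1} - Z"
      show "mon (\<lambda>t. K t x u) J"
        by (rule mono_K[OF J(1)]) (use J(2) in \<open>auto simp: Z_def\<close>)
    qed
  qed
  also have "\<dots> \<le> 2 * 4 ^ 3 * M"
    using Zc M0 by (intro mult_right_mono mult_left_mono power_increasing) auto
  finally show ?thesis unfolding M_def by simp
qed

lemma eta_cont:
  assumes "\<forall>k. (deriv ^^ k) eta differentiable_on {0<..}"
  shows "continuous_on {0<..} eta"
  using assms[rule_format, of 0] by (simp add: differentiable_imp_continuous_on)

lemma eta_bound:
  fixes eta :: "real \<Rightarrow> real"
  assumes cont: "continuous_on {0<..} eta" and one: "\<forall>s\<in>{0..1/2}. eta s = 1" and zero: "\<forall>s\<ge>1. eta s = 0"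
  shows "\<exists>B\<ge>1. \<forall>s\<ge>0. \<bar>1 - eta s\<bar> \<le> B"
proof -
  have "compact (eta ` {1/2..1})"
    by (rule compact_continuous_image[OF continuous_on_subset[OF cont] compact_Icc]) auto
  then have "bounded (eta ` {1/2..1})" by (rule compact_imp_bounded)
  then obtain a where a: "\<forall>y\<in>eta ` {1/2..1}. \<bar>y\<bar> \<le> a" unfolding bounded_real by blast
  show ?thesis
  proof (intro exI[of _ "1 + \<bar>a\<bar>"] conjI allI impI)
    fix s :: real assume s: "0 \<le> s"
    show "\<bar>1 - eta s\<bar> \<le> 1 + \<bar>a\<bar>"
    proof (cases "s \<le> 1/2")
      case True then show ?thesis using one s by simp
    next
      case False
      show ?thesis
      proof (cases "1 \<le> s")
        case True then show ?thesis using zero by simp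
      next
        case False
        then have "\<bar>eta s\<bar> \<le> a" using a \<open>\<not> s \<le> 1/2\<close> by auto
        then show ?thesis by linarith
      qed
    qed
  qed simp
qed

lemma eta_meas:
  fixes eta :: "real \<Rightarrow> real"
  assumes cont: "continuous_on {0<..} eta" and one: "\<forall>s\<in>{0..1/2}. eta s = 1"
  shows "(\<lambda>u. eta ((1 + \<bar>x\<bar>) * \<bar>x - u\<bar>)) \<in> borel_measurable borel"
proof -
  have eq: "(\<lambda>u. eta ((1 + \<bar>x\<bar>) * \<bar>x - u\<bar>)) = (\<lambda>u. eta (max ((1 + \<bar>x\<bar>) * \<bar>x - u\<bar>) (1/4)))"
  proof
    fix u
    show "eta ((1 + \<bar>x\<bar>) * \<bar>x - u\<bar>) = eta (max ((1 + \<bar>x\<bar>) * \<bar>x - u\<bar>) (1/4))"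
    proof (cases "(1 + \<bar>x\<bar>) * \<bar>x - u\<bar> \<le> 1/4")
      case True
      have "0 \<le> (1 + \<bar>x\<bar>) * \<bar>x - u\<bar>" by simp
      then show ?thesis using True one by (simp add: max_def)
    qed (simp add: max_def)
  qed
  have "continuous_on UNIV (\<lambda>u. eta (max ((1 + \<bar>x\<bar>) * \<bar>x - u\<bar>) (1/4)))"
    by (rule continuous_on_compose2[OF cont]) (auto intro!: continuous_intros)
  then show ?thesis unfolding eq by (rule borel_measurable_continuous_onI)
qed

lemma meas_gauss: "f \<in> borel_measurable borel \<Longrightarrow> f \<in> borel_measurable gauss"
  using measurable_cong_sets[OF sets_gauss refl] by simp

lemma K_meas: "(\<lambda>u. K t x u) \<in> borel_measurable borel"
  unfolding K_def by measurable

lemma K_le: assumes "0 < t" shows "\<bar>K t x u\<bar> \<le> exp (R x) / sqrt (1 - exp (-2 * t))"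
proof -
  have "0 < 1 - exp (-2 * t)" using assms by simp
  have "exp (- (1/2) * (exp (- t) * u - x)\<^sup>2 / (1 - exp (-2 * t))) \<le> 1"
    using \<open>0 < 1 - exp (-2 * t)\<close> by simp
  then have "K t x u \<le> exp (R x) / sqrt (1 - exp (-2 * t)) * 1"
    unfolding K_def using \<open>0 < 1 - exp (-2 * t)\<close> by (intro mult_left_mono) auto
  then show ?thesis using K_nonneg[OF assms] by simp
qed

lemma F_integrable:
  fixes eta f :: "real \<Rightarrow> real"
  assumes cont: "continuous_on {0<..} eta" and one: "\<forall>s\<in>{0..1/2}. eta s = 1"
    and B: "\<forall>s\<ge>0. \<bar>1 - eta s\<bar> \<le> B" and f: "integrable gauss f" and t: "0 < t"
  shows "integrable gauss (\<lambda>u. f u * K t x u * (1 - eta ((1 + \<bar>x\<bar>) * \<bar>x - u\<bar>)))"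
proof (rule Bochner_Integration.integrable_bound)
  show "integrable gauss (\<lambda>u. f u * (exp (R x) / sqrt (1 - exp (-2 * t)) * B))"
    using f by (intro integrable_mult_left) auto
  have "(\<lambda>u. eta ((1 + \<bar>x\<bar>) * \<bar>x - u\<bar>)) \<in> borel_measurable gauss"
    by (rule meas_gauss[OF eta_meas[OF cont one]])
  moreover have "(\<lambda>u. K t x u) \<in> borel_measurable gauss" by (rule meas_gauss[OF K_meas])
  moreover have "f \<in> borel_measurable gauss" using f by (rule borel_measurable_integrable)
  ultimately show "(\<lambda>u. f u * K t x u * (1 - eta ((1 + \<bar>x\<bar>) * \<bar>x - u\<bar>))) \<in> borel_measurable gauss"
    by measurable
  show "AE u in gauss. norm (f u * K t x u * (1 - eta ((1 + \<bar>x\<bar>) * \<bar>x - u\<bar>)))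
       \<le> norm (f u * (exp (R x) / sqrt (1 - exp (-2 * t)) * B))"
  proof (rule AE_I2)
    fix u
    have b1: "\<bar>1 - eta ((1 + \<bar>x\<bar>) * \<bar>x - u\<bar>)\<bar> \<le> B" using B by simp
    have b2: "\<bar>K t x u\<bar> \<le> exp (R x) / sqrt (1 - exp (-2 * t))" by (rule K_le[OF t])
    have "\<bar>K t x u\<bar> * \<bar>1 - eta ((1 + \<bar>x\<bar>) * \<bar>x - u\<bar>)\<bar> \<le> exp (R x) / sqrt (1 - exp (-2 * t)) * B"
      using b1 b2 by (intro mult_mono) auto
    then have "\<bar>f u\<bar> * (\<bar>K t x u\<bar> * \<bar>1 - eta ((1 + \<bar>x\<bar>) * \<bar>x - u\<bar>)\<bar>) \<le> \<bar>f u\<bar> * (exp (R x) / sqrt (1 - exp (-2 * t)) * B)"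
      by (rule mult_left_mono) simp
    moreover have "0 \<le> exp (R x) / sqrt (1 - exp (-2 * t)) * B"
      using b1 t by (intro mult_nonneg_nonneg) (auto intro: order_trans[OF abs_ge_zero])
    ultimately show "norm (f u * K t x u * (1 - eta ((1 + \<bar>x\<bar>) * \<bar>x - u\<bar>)))
       \<le> norm (f u * (exp (R x) / sqrt (1 - exp (-2 * t)) * B))"
    proof -
      assume h1: "\<bar>f u\<bar> * (\<bar>K t x u\<bar> * \<bar>1 - eta ((1 + \<bar>x\<bar>) * \<bar>x - u\<bar>)\<bar>) \<le> \<bar>f u\<bar> * (exp (R x) / sqrt (1 - exp (-2 * t)) * B)"
        and h2: "0 \<le> exp (R x) / sqrt (1 - exp (-2 * t)) * B"
      have e1: "norm (f u * K t x u * (1 - eta ((1 + \<bar>x\<bar>) * \<bar>x - u\<bar>))) = \<bar>f u\<bar> * (\<bar>K t x u\<bar> * \<bar>1 - eta ((1 + \<bar>x\<bar>) * \<bar>x - u\<bar>)\<bar>)"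
        by (simp add: abs_mult)
      have e2: "norm (f u * (exp (R x) / sqrt (1 - exp (-2 * t)) * B)) = \<bar>f u\<bar> * (exp (R x) / sqrt (1 - exp (-2 * t)) * B)"
        by (simp only: real_norm_def abs_mult[of "f u"] abs_of_nonneg[OF h2])
      show ?thesis unfolding e1 e2 by (rule h1)
    qed
  qed
qed

lemma var_H:
  fixes eta f :: "real \<Rightarrow> real" and x :: real and ts :: "real list"
  assumes cont: "continuous_on {0<..} eta" and one: "\<forall>s\<in>{0..1/2}. eta s = 1"
    and B: "\<forall>s\<ge>0. \<bar>1 - eta s\<bar> \<le> B" and f: "integrable gauss f"
    and ts: "sorted_wrt (<) ts" "set ts \<subseteq> {0<..1}"
  shows "(\<Sum>i\<in>{1..<length ts}. \<bar>Hglob eta (ts ! i) f x - Hglob eta (ts ! (i - 1)) f x\<bar>)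
         \<le> (\<integral>u. \<bar>f u\<bar> \<partial>gauss) * (B * (128 * (288 * (1 + \<bar>x\<bar>) * exp (R x))))"
proof -
  define c where "c u = 1 - eta ((1 + \<bar>x\<bar>) * \<bar>x - u\<bar>)" for u
  define F where "F t u = f u * K t x u * c u" for t u
  define M where "M = 128 * (288 * (1 + \<bar>x\<bar>) * exp (R x))"
  define I where "I = {1..<length ts}"
  have B0: "0 \<le> B" using B by (auto intro: order_trans[OF abs_ge_zero])
  have M0: "0 \<le> M" unfolding M_def by simp
  have H: "Hglob eta t f x = (\<integral>u. F t u \<partial>gauss)" for t unfolding Hglob_def F_def c_def ..
  have mem: "ts ! i \<in> {0<..1} \<and> ts ! (i - 1) \<in> {0<..1}" if "i \<in> I" for i
  proof -
    have "ts ! i \<in> set ts" by (rule nth_mem) (use that in \<open>simp add: I_def\<close>)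
    moreover have "ts ! (i - 1) \<in> set ts" by (rule nth_mem) (use that in \<open>auto simp: I_def\<close>)
    ultimately show ?thesis using ts(2) by auto
  qed
  have Fi: "integrable gauss (F t)" if "0 < t" for t
    unfolding F_def[abs_def] c_def by (rule F_integrable[OF cont one B f that])
  have Di0: "integrable gauss (\<lambda>u. F (ts ! i) u - F (ts ! (i - 1)) u)" if "i \<in> I" for i
    using Fi mem[OF that] by auto
  have Di: "integrable gauss (\<lambda>u. \<bar>F (ts ! i) u - F (ts ! (i - 1)) u\<bar>)" if "i \<in> I" for i
    using Di0[OF that] by (rule integrable_abs)
  have step: "\<bar>Hglob eta (ts ! i) f x - Hglob eta (ts ! (i - 1)) f x\<bar> \<le> (\<integral>u. \<bar>F (ts ! i) u - F (ts ! (i - 1)) u\<bar> \<partial>gauss)"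
    if "i \<in> I" for i
  proof -
    have "Hglob eta (ts ! i) f x - Hglob eta (ts ! (i - 1)) f x = (\<integral>u. F (ts ! i) u - F (ts ! (i - 1)) u \<partial>gauss)"
      unfolding H by (rule Bochner_Integration.integral_diff[symmetric]) (use Fi mem[OF that] in auto)
    also have "\<bar>\<dots>\<bar> \<le> (\<integral>u. \<bar>F (ts ! i) u - F (ts ! (i - 1)) u\<bar> \<partial>gauss)"
      by (rule integral_abs_bound_integral[OF Di0[OF that] Di[OF that]]) simp
    finally show ?thesis .
  qed
  have pw: "(\<Sum>i\<in>I. \<bar>F (ts ! i) u - F (ts ! (i - 1)) u\<bar>) \<le> \<bar>f u\<bar> * (B * M)" for u
  proof -
    have "(\<Sum>i\<in>I. \<bar>F (ts ! i) u - F (ts ! (i - 1)) u\<bar>) = (\<Sum>i\<in>I. (\<bar>f u\<bar> * \<bar>c u\<bar>) * \<bar>K (ts ! i) x u - K (ts ! (i - 1)) x u\<bar>)"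
    proof (rule sum.cong[OF refl])
      fix i
      have "F (ts ! i) u - F (ts ! (i - 1)) u = (f u * c u) * (K (ts ! i) x u - K (ts ! (i - 1)) x u)"
        unfolding F_def by (simp add: algebra_simps)
      then show "\<bar>F (ts ! i) u - F (ts ! (i - 1)) u\<bar> = (\<bar>f u\<bar> * \<bar>c u\<bar>) * \<bar>K (ts ! i) x u - K (ts ! (i - 1)) x u\<bar>"
        by (simp add: abs_mult)
    qed
    also have "\<dots> = (\<bar>f u\<bar> * \<bar>c u\<bar>) * vsum (\<lambda>t. K t x u) ts"
      unfolding vsum_eq I_def by (simp add: sum_distrib_left)
    also have "\<dots> \<le> \<bar>f u\<bar> * (B * M)"
    proof (cases "c u = 0")
      case True then show ?thesis using B0 M0 by simp
    next
      case False
      have a0: "0 \<le> (1 + \<bar>x\<bar>) * \<bar>x - u\<bar>" by simp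
      have "1/2 \<le> (1 + \<bar>x\<bar>) * \<bar>x - u\<bar>"
      proof (rule ccontr)
        assume "\<not> ?thesis"
        then have "eta ((1 + \<bar>x\<bar>) * \<bar>x - u\<bar>) = 1" using one a0 by auto
        then show False using False unfolding c_def by simp
      qed
      then have v: "vsum (\<lambda>t. K t x u) ts \<le> M" unfolding M_def by (rule K_var[OF _ ts])
      have cb: "\<bar>c u\<bar> \<le> B" unfolding c_def using B a0 by simp
      have "\<bar>c u\<bar> * vsum (\<lambda>t. K t x u) ts \<le> B * M"
        using cb v B0 by (intro mult_mono) (auto simp: vsum_nonneg)
      then have "\<bar>f u\<bar> * (\<bar>c u\<bar> * vsum (\<lambda>t. K t x u) ts) \<le> \<bar>f u\<bar> * (B * M)"
        by (rule mult_left_mono) simp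
      then show ?thesis by (simp add: mult.assoc)
    qed
    finally show ?thesis .
  qed
  have "(\<Sum>i\<in>I. \<bar>Hglob eta (ts ! i) f x - Hglob eta (ts ! (i - 1)) f x\<bar>)
      \<le> (\<Sum>i\<in>I. (\<integral>u. \<bar>F (ts ! i) u - F (ts ! (i - 1)) u\<bar> \<partial>gauss))"
    by (rule sum_mono) (rule step)
  also have "\<dots> = (\<integral>u. (\<Sum>i\<in>I. \<bar>F (ts ! i) u - F (ts ! (i - 1)) u\<bar>) \<partial>gauss)"
    by (rule Bochner_Integration.integral_sum[symmetric]) (rule Di)
  also have "\<dots> \<le> (\<integral>u. \<bar>f u\<bar> * (B * M) \<partial>gauss)"
  proof (rule Bochner_Integration.integral_mono)
    show "integrable gauss (\<lambda>u. \<Sum>i\<in>I. \<bar>F (ts ! i) u - F (ts ! (i - 1)) u\<bar>)"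
      by (rule Bochner_Integration.integrable_sum) (rule Di)
    show "integrable gauss (\<lambda>u. \<bar>f u\<bar> * (B * M))"
      using f by (intro integrable_mult_left integrable_abs)
  qed (rule pw)
  also have "\<dots> = (\<integral>u. \<bar>f u\<bar> \<partial>gauss) * (B * M)"
    by (rule Bochner_Integration.integral_mult_left) (use f in auto)
  finally show ?thesis unfolding I_def M_def .
qed

lemma powr_sum_le:
  fixes a :: "nat \<Rightarrow> real"
  assumes fin: "finite I" and nn: "\<forall>i\<in>I. 0 \<le> a i" and r: "1 \<le> \<rho>"
  shows "(\<Sum>i\<in>I. a i powr \<rho>) powr (1 / \<rho>) \<le> (\<Sum>i\<in>I. a i)"
proof -
  define S where "S = (\<Sum>i\<in>I. a i)"
  have S0: "0 \<le> S" unfolding S_def using nn by (intro sum_nonneg) auto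
  have le: "a i \<le> S" if "i \<in> I" for i
    unfolding S_def using nn that fin by (intro member_le_sum) auto
  show ?thesis
  proof (cases "S = 0")
    case True
    then have "\<forall>i\<in>I. a i = 0" using sum_nonneg_eq_0_iff[OF fin] nn unfolding S_def by auto
    then show ?thesis using True unfolding S_def by simp
  next
    case False
    then have Sp: "0 < S" using S0 by simp
    have each: "a i powr \<rho> \<le> a i * S powr (\<rho> - 1)" if "i \<in> I" for i
    proof (cases "a i = 0")
      case True then show ?thesis using r by simp
    next
      case False
      then have ap: "0 < a i" using nn that by force
      have pa: "a i powr (1 + (\<rho> - 1)) = a i powr 1 * a i powr (\<rho> - 1)" by (rule powr_add)
      have "a i powr \<rho> = a i * a i powr (\<rho> - 1)" using pa ap by simp
      also have "\<dots> \<le> a i * S powr (\<rho> - 1)"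
        using ap le[OF that] r by (intro mult_left_mono powr_mono2) auto
      finally show ?thesis .
    qed
    have "(\<Sum>i\<in>I. a i powr \<rho>) \<le> (\<Sum>i\<in>I. a i * S powr (\<rho> - 1))"
      by (rule sum_mono) (rule each)
    also have "\<dots> = S * S powr (\<rho> - 1)" unfolding S_def by (simp add: sum_distrib_right)
    also have "\<dots> = S powr \<rho>"
    proof -
      have pa: "S powr (1 + (\<rho> - 1)) = S powr 1 * S powr (\<rho> - 1)" by (rule powr_add)
      then show ?thesis using Sp by simp
    qed
    finally have sl: "(\<Sum>i\<in>I. a i powr \<rho>) \<le> S powr \<rho>" .
    have "(\<Sum>i\<in>I. a i powr \<rho>) powr (1 / \<rho>) \<le> (S powr \<rho>) powr (1 / \<rho>)"
      using sl r by (intro powr_mono2) (auto intro: sum_nonneg)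
    also have "\<dots> = S" using r Sp by (simp add: powr_powr)
    finally show ?thesis unfolding S_def .
  qed
qed

lemma rho_bound:
  fixes eta f :: "real \<Rightarrow> real" and x :: real
  assumes cont: "continuous_on {0<..} eta" and one: "\<forall>s\<in>{0..1/2}. eta s = 1"
    and B: "\<forall>s\<ge>0. \<bar>1 - eta s\<bar> \<le> B" and f: "integrable gauss f" and r: "1 \<le> \<rho>"
  shows "rho_var \<rho> {0<..1} (\<lambda>t. Hglob eta t f x)
      \<le> ereal ((\<integral>u. \<bar>f u\<bar> \<partial>gauss) * (B * (128 * (288 * (1 + \<bar>x\<bar>) * exp (R x)))))"
  unfolding rho_var_def
proof (rule SUP_least)
  fix ts :: "real list" assume "ts \<in> {ts. sorted_wrt (<) ts \<and> set ts \<subseteq> {0<..1}}"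
  then have ts: "sorted_wrt (<) ts" "set ts \<subseteq> {0<..1}" by auto
  have "(\<Sum>i\<in>{1..<length ts}. \<bar>Hglob eta (ts ! i) f x - Hglob eta (ts ! (i - 1)) f x\<bar> powr \<rho>) powr (1 / \<rho>)
      \<le> (\<Sum>i\<in>{1..<length ts}. \<bar>Hglob eta (ts ! i) f x - Hglob eta (ts ! (i - 1)) f x\<bar>)"
    by (rule powr_sum_le[OF _ _ r]) auto
  also have "\<dots> \<le> (\<integral>u. \<bar>f u\<bar> \<partial>gauss) * (B * (128 * (288 * (1 + \<bar>x\<bar>) * exp (R x))))"
    by (rule var_H[OF cont one B f ts])
  finally show "ereal ((\<Sum>i\<in>{1..<length ts}. \<bar>Hglob eta (ts ! i) f x - Hglob eta (ts ! (i - 1)) f x\<bar> powr \<rho>) powr (1 / \<rho>))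
      \<le> ereal ((\<integral>u. \<bar>f u\<bar> \<partial>gauss) * (B * (128 * (288 * (1 + \<bar>x\<bar>) * exp (R x)))))"
    by simp
qed

theorem proposition4p1:
  fixes eta :: "real \<Rightarrow> real" and \<rho> :: real
  assumes eta_smooth: "\<forall>k. (deriv ^^ k) eta differentiable_on {0<..}"
    and eta_nonneg: "\<forall>s\<ge>0. eta s \<ge> 0"
    and eta_one: "\<forall>s\<in>{0..1/2}. eta s = 1"
    and eta_zero: "\<forall>s\<ge>1. eta s = 0"
    and rho: "\<rho> > 2"
  shows "\<exists>C. \<forall>\<alpha>>0. \<forall>f. integrable gauss f \<longrightarrow>
           emeasure gauss {x. rho_var \<rho> {0<..1} (\<lambda>t. Hglob eta t f x) > ereal \<alpha>}
             \<le> ennreal (C / \<alpha> * (\<integral>u. \<bar>f u\<bar> \<partial>gauss))"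
proof -
  have cont: "continuous_on {0<..} eta" by (rule eta_cont[OF eta_smooth])
  obtain B where B1: "1 \<le> B" and B: "\<forall>s\<ge>0. \<bar>1 - eta s\<bar> \<le> B"
    using eta_bound[OF cont eta_one eta_zero] by blast
  have r: "1 \<le> \<rho>" using rho by simp
  show ?thesis
  proof (intro exI[of _ "4 * B * 36864"] allI impI)
    fix \<alpha> :: real and f :: "real \<Rightarrow> real"
    assume a: "\<alpha> > 0" and f: "integrable gauss f"
    define N where "N = (\<integral>u. \<bar>f u\<bar> \<partial>gauss)"
    have N0: "0 \<le> N" unfolding N_def by simp
    define c0 where "c0 = N * (B * 36864)"
    have c00: "0 \<le> c0" unfolding c0_def using N0 B1 by simp
    have sub: "{x. rho_var \<rho> {0<..1} (\<lambda>t. Hglob eta t f x) > ereal \<alpha>}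
        \<subseteq> {x. \<alpha> < c0 * ((1 + \<bar>x\<bar>) * exp (x\<^sup>2 / 2))}"
    proof safe
      fix x assume x: "ereal \<alpha> < rho_var \<rho> {0<..1} (\<lambda>t. Hglob eta t f x)"
      have "rho_var \<rho> {0<..1} (\<lambda>t. Hglob eta t f x) \<le> ereal (N * (B * (128 * (288 * (1 + \<bar>x\<bar>) * exp (R x)))))"
        unfolding N_def by (rule rho_bound[OF cont eta_one B f r])
      with x have "ereal \<alpha> < ereal (N * (B * (128 * (288 * (1 + \<bar>x\<bar>) * exp (R x)))))"
        by (rule order_less_le_trans)
      then have "\<alpha> < N * (B * (128 * (288 * (1 + \<bar>x\<bar>) * exp (R x))))" by simp
      moreover have eq: "N * (B * (128 * (288 * (1 + \<bar>x\<bar>) * exp (R x)))) = c0 * ((1 + \<bar>x\<bar>) * exp (x\<^sup>2 / 2))"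
        unfolding c0_def R_def by (simp add: algebra_simps)
      ultimately show "\<alpha> < c0 * ((1 + \<bar>x\<bar>) * exp (x\<^sup>2 / 2))" by (simp only: eq)
    qed
    show "emeasure gauss {x. rho_var \<rho> {0<..1} (\<lambda>t. Hglob eta t f x) > ereal \<alpha>}
             \<le> ennreal (4 * B * 36864 / \<alpha> * N)"
    proof (cases "c0 = 0")
      case True
      then have "{x. rho_var \<rho> {0<..1} (\<lambda>t. Hglob eta t f x) > ereal \<alpha>} = {}" using sub a by auto
      then show ?thesis by simp
    next
      case False
      then have cp: "0 < c0" using c00 by simp
      have eqs: "{x. \<alpha> < c0 * ((1 + \<bar>x\<bar>) * exp (x\<^sup>2 / 2))} = {x. \<alpha> / c0 < (1 + \<bar>x\<bar>) * exp (x\<^sup>2 / 2)}"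
        using cp by (auto simp: field_simps)
      have ms: "{x. \<alpha> / c0 < (1 + \<bar>x\<bar>) * exp (x\<^sup>2 / 2)} \<in> sets gauss" by measurable
      have "emeasure gauss {x. rho_var \<rho> {0<..1} (\<lambda>t. Hglob eta t f x) > ereal \<alpha>}
          \<le> emeasure gauss {x. \<alpha> / c0 < (1 + \<bar>x\<bar>) * exp (x\<^sup>2 / 2)}"
        by (rule emeasure_mono[OF sub[unfolded eqs] ms])
      also have "\<dots> \<le> ennreal (4 / (\<alpha> / c0))" by (rule weak_phi) (use a cp in simp)
      also have "4 / (\<alpha> / c0) = 4 * B * 36864 / \<alpha> * N" unfolding c0_def using a by (simp add: field_simps)
      finally show ?thesis .
    qed
  qed
qed

end
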